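(* In the setting of the context, suppose there exists $Q^-\in\mathcal L_1^-$ such that $\delta(Q^-,Q^+)=\bot$ for every $Q^+\in\mathcal L_1^+$. Then the only pair $(h_1,h_2)\in\mathbb C(s)^2$ with $\widetilde\gamma_1h_1+\widetilde\gamma_2h_2=0$, $h_1^{\iota_1}=-h_1$ and $h_2^{\iota_2}=-h_2$ is $(0,0)$.
   Context: For a genus-zero weighted quadrant walk model (step set one of the five genus-zero sets, step weights $d_{i,j}>0$, Boltzmann weights $a,b>0$), $A=1-1/a$, $B=1-1/b$. $s\mapsto(x(s),y(s))$ is a fixed rational parametrization by $\mathbb P^1$ of the kernel curve (for a fixed real $t$ transcendental over $\mathbb Q((d_{i,j}),a,b)$), with $x(1/s)=x(s)$, $y(q/s)=y(s)$ for a fixed real $q$ not a root of unity; $\iota_1(s)=1/s$, $\iota_2(s)=q/s$, $\sigma(s)=qs$, $h^\tau=h\circ\tau$. $\widetilde\gamma_1=A/x(s)-td_{1,-1}/y(s)$ and $\widetilde\gamma_2=B/y(s)-td_{-1,1}/x(s)$ have divisors $(\widetilde\gamma_1)=P_1+P_2-0-\infty$, $(\widetilde\gamma_2)=P_3+P_4-0-\infty$, $P_i\notin\{0,\infty\}$. $\mathcal L_1^-=\{P_1,P_2,\iota_2P_3,\iota_2P_4\}$, $\mathcal L_1^+=\{\iota_1P_1,\iota_1P_2,\sigma^{-1}P_3,\sigma^{-1}P_4\}$. For $P,P'\in\mathbb P^1\setminus\{0,\infty\}$, the $\sigma$-distance $\delta(P,P')$ is the unique integer $n$ with $\sigma^nP=P'$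 if it exists, and $\bot$ otherwise. *)

theory Defs
  imports "HOL-Computational_Algebra.Computational_Algebra"
begin

(* The field C(s) of rational functions in one variable s is modelled as complex poly fract. *)
type_synonym ratfun = "complex poly fract"

definition const_rf :: "complex \<Rightarrow> ratfun" where
  "const_rf c = to_fract [:c:]"

definition var_s :: ratfun where
  "var_s = to_fract [:0, 1:]"

definition poly_at_rf :: "complex poly \<Rightarrow> ratfun \<Rightarrow> ratfun" where
  "poly_at_rf p g = (\<Sum>i\<le>degree p. const_rf (coeff p i) * g ^ i)"

(* composition h(g(s)) for a non-constant rational function g (h^tau with tau(s) = g(s)) *)
definition rf_comp :: "ratfun \<Rightarrow> ratfun \<Rightarrow> ratfun" where
  "rf_comp h g = (SOME r. \<exists>p d. d \<noteq> 0 \<and> h = Fract p d \<and> r = poly_at_rf p g / poly_at_rf d g)"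

definition iota1_rf :: "ratfun \<Rightarrow> ratfun" where
  "iota1_rf h = rf_comp h (1 / var_s)"

definition iota2_rf :: "complex \<Rightarrow> ratfun \<Rightarrow> ratfun" where
  "iota2_rf q h = rf_comp h (const_rf q / var_s)"

definition rf_ord :: "complex \<Rightarrow> ratfun \<Rightarrow> int" where
  "rf_ord z f = (SOME k. \<exists>p d. p \<noteq> 0 \<and> d \<noteq> 0 \<and> f = Fract p d \<and>
                   k = int (order z p) - int (order z d))"

definition rf_ord_inf :: "ratfun \<Rightarrow> int" where
  "rf_ord_inf f = (SOME k. \<exists>p d. p \<noteq> 0 \<and> d \<noteq> 0 \<and> f = Fract p d \<and>
                   k = int (degree d) - int (degree p))"

definition divisor_is_PP'_0_inf :: "ratfun \<Rightarrow> complex \<Rightarrow> complex \<Rightarrow> bool" where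
  "divisor_is_PP'_0_inf f P P' \<longleftrightarrow> f \<noteq> 0 \<and>
     (\<forall>z. rf_ord z f = int (count {#P, P'#} z) - (if z = 0 then 1 else 0)) \<and>
     rf_ord_inf f = -1"

(* sigma-distance, sigma(s) = q s; None plays the role of bottom *)
definition sigma_dist :: "complex \<Rightarrow> complex \<Rightarrow> complex \<Rightarrow> int option" where
  "sigma_dist q P P' = (if \<exists>!n::int. q powi n * P = P' then Some (THE n::int. q powi n * P = P') else None)"

(* The five genus-zero step sets (listed up to the symmetry x <-> y, i.e. seven sets):
   {NW, SE} together with a nonempty subset of {N, E, NE}. *)
definition genus_zero_step_sets :: "(int \<times> int) set set" where
  "genus_zero_step_sets = {S. {(-1,1),(1,-1)} \<subseteq> S \<and> S \<subseteq> {(-1,1),(1,-1),(0,1),(1,0),(1,1)}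
                               \<and> S \<noteq> {(-1,1),(1,-1)}}"

definition is_real_subfield :: "real set \<Rightarrow> bool" where
  "is_real_subfield F \<longleftrightarrow> 0 \<in> F \<and> 1 \<in> F \<and> (\<forall>u\<in>F. \<forall>v\<in>F. u + v \<in> F \<and> u * v \<in> F \<and> - u \<in> F)
      \<and> (\<forall>u\<in>F. u \<noteq> 0 \<longrightarrow> inverse u \<in> F)"

definition gen_subfield :: "real set \<Rightarrow> real set" where
  "gen_subfield X = \<Inter>{F. is_real_subfield F \<and> X \<subseteq> F}"

definition transcendental_over :: "real set \<Rightarrow> real \<Rightarrow> bool" where
  "transcendental_over F t \<longleftrightarrow> \<not> (\<exists>p :: real poly. p \<noteq> 0 \<and> (\<forall>i. coeff p i \<in> F) \<and> poly p t = 0)"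

(* the kernel K(x,y,t) = xy (1 - t sum_{(i,j)} d_{i,j} x^i y^j), evaluated at rational functions x, y *)
definition kernel_rf :: "(int \<Rightarrow> int \<Rightarrow> real) \<Rightarrow> real \<Rightarrow> ratfun \<Rightarrow> ratfun \<Rightarrow> ratfun" where
  "kernel_rf d t x y = x * y - const_rf (complex_of_real t) *
      (\<Sum>i\<in>{-1,0,1::int}. \<Sum>j\<in>{-1,0,1::int}.
          const_rf (complex_of_real (d i j)) * x ^ nat (i + 1) * y ^ nat (j + 1))"

(* s -> (x(s), y(s)) is generically injective on P^1 (so, being a parametrization of the
   kernel curve, it is birational onto it) *)
definition generically_injective :: "ratfun \<Rightarrow> ratfun \<Rightarrow> bool" where
  "generically_injective x y \<longleftrightarrow> (\<exists>p1 d1 p2 d2 (F :: complex set).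
      d1 \<noteq> 0 \<and> d2 \<noteq> 0 \<and> x = Fract p1 d1 \<and> y = Fract p2 d2 \<and> finite F \<and>
      (\<forall>z. z \<notin> F \<longrightarrow> poly d1 z \<noteq> 0 \<and> poly d2 z \<noteq> 0) \<and>
      inj_on (\<lambda>z. (poly p1 z / poly d1 z, poly p2 z / poly d2 z)) (- F))"

end

theory Submission
  imports Defs
begin

lemma to_fract_power: "to_fract (x ^ n) = to_fract x ^ n"
  by (induct n) simp_all

lemma const_rf_mult: "const_rf a * const_rf b = const_rf (a * b)"
  by (simp add: const_rf_def flip: to_fract_mult)

lemma const_rf_1: "const_rf 1 = 1"
  by (metis const_rf_def pCons_one to_fract_1)

lemma const_rf_power: "const_rf a ^ n = const_rf (a ^ n)"
  by (induct n) (simp_all add: const_rf_mult const_rf_1)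


lemma var_s_nz: "var_s \<noteq> 0"
  by (simp add: var_s_def)

lemma to_fract_as_sum:
  assumes "degree P \<le> N"
  shows "to_fract P = (\<Sum>j\<le>N. const_rf (coeff P j) * var_s ^ j)"
proof -
  have "to_fract P = to_fract (\<Sum>j\<le>N. monom (coeff P j) j)"
    using poly_as_sum_of_monoms'[OF assms] by simp
  also have "\<dots> = (\<Sum>j\<le>N. const_rf (coeff P j) * var_s ^ j)"
    unfolding to_fract_sum
  proof (rule sum.cong)
    fix j
    have "monom (coeff P j) j = smult (coeff P j) ([:0,1:] ^ j)"
      by (simp add: monom_altdef)
    also have "\<dots> = [:coeff P j:] * [:0,1:] ^ j" by simp
    finally show "to_fract (monom (coeff P j) j) = const_rf (coeff P j) * var_s ^ j"
      by (simp only: const_rf_def var_s_def to_fract_mult to_fract_power)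
  qed simp
  finally show ?thesis .
qed

definition Rc :: "complex \<Rightarrow> complex poly \<Rightarrow> complex poly" where
  "Rc c p = reflect_poly (pcompose p [:0, c:])"

lemma degree_pc: "(c::complex) \<noteq> 0 \<Longrightarrow> degree (pcompose p [:0, c:]) = degree p"
  by (subst degree_pcompose) (simp add: degree_pCons_eq)

lemma phi_eq:
  assumes c: "c \<noteq> 0"
  shows "poly_at_rf p (const_rf c / var_s) * var_s ^ degree p = to_fract (Rc c p)"
proof -
  let ?n = "degree p"
  have "poly_at_rf p (const_rf c / var_s) * var_s ^ ?n
      = (\<Sum>i\<le>?n. const_rf (coeff p i) * (const_rf c / var_s) ^ i * var_s ^ ?n)"
    by (simp add: poly_at_rf_def sum_distrib_right)
  also have "\<dots> = (\<Sum>i\<le>?n. const_rf (c ^ i * coeff p i) * var_s ^ (?n - i))"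
  proof (rule sum.cong)
    fix i assume "i \<in> {..?n}"
    then have "var_s ^ ?n = var_s ^ i * var_s ^ (?n - i)"
      by (simp flip: power_add)
    then show "const_rf (coeff p i) * (const_rf c / var_s) ^ i * var_s ^ ?n
        = const_rf (c ^ i * coeff p i) * var_s ^ (?n - i)"
      using var_s_nz
      by (simp add: power_divide const_rf_power flip: const_rf_mult)
  qed simp
  also have "\<dots> = (\<Sum>j\<le>?n. const_rf (coeff (Rc c p) j) * var_s ^ j)"
    by (rule sum.reindex_bij_witness[where i="\<lambda>j. ?n - j" and j="\<lambda>i. ?n - i"])
       (auto simp: Rc_def coeff_reflect_poly degree_pc[OF c] coeff_pcompose_linear)
  also have "\<dots> = to_fract (Rc c p)"
    by (rule to_fract_as_sum[symmetric])
       (metis Rc_def degree_pc[OF c] degree_reflect_poly_le)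
  finally show ?thesis .
qed

lemma Rc_mult: "Rc c (p * q) = Rc c p * Rc c q"
  by (simp add: Rc_def pcompose_mult reflect_poly_mult)

lemma Rc_eq_0: "c \<noteq> 0 \<Longrightarrow> Rc c p = 0 \<longleftrightarrow> p = 0"
  by (simp add: Rc_def pcompose_eq_0_iff degree_pCons_eq)

definition phi :: "complex \<Rightarrow> complex poly \<Rightarrow> ratfun" where
  "phi c p = to_fract (Rc c p) / var_s ^ degree p"

lemma poly_at_phi: "c \<noteq> 0 \<Longrightarrow> poly_at_rf p (const_rf c / var_s) = phi c p"
  using phi_eq[of c p] var_s_nz by (simp add: phi_def field_simps)

lemma phi_mult: "c \<noteq> 0 \<Longrightarrow> phi c (p * q) = phi c p * phi c q"
  by (cases "p = 0 \<or> q = 0")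
     (auto simp: phi_def Rc_mult degree_mult_eq power_add Rc_eq_0)

lemma phi_nz: "c \<noteq> 0 \<Longrightarrow> p \<noteq> 0 \<Longrightarrow> phi c p \<noteq> 0"
  by (simp add: phi_def Rc_eq_0 var_s_nz)

lemma Fract_0: "Fract 0 d = 0"
  by (metis Zero_fract_def eq_fract(3))

lemma rf_comp_Fract:
  assumes c: "c \<noteq> 0" and d: "d \<noteq> 0"
  shows "rf_comp (Fract p d) (const_rf c / var_s) = phi c p / phi c d"
  unfolding rf_comp_def
proof (rule some_equality)
  show "\<exists>p' d'. d' \<noteq> 0 \<and> Fract p d = Fract p' d' \<and> phi c p / phi c d = poly_at_rf p' (const_rf c / var_s) / poly_at_rf d' (const_rf c / var_s)"
    using d poly_at_phi[OF c] by auto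
next
  fix r
  assume "\<exists>p' d'. d' \<noteq> 0 \<and> Fract p d = Fract p' d' \<and> r = poly_at_rf p' (const_rf c / var_s) / poly_at_rf d' (const_rf c / var_s)"
  then obtain p' d' where d': "d' \<noteq> 0" and e: "Fract p d = Fract p' d'" and r: "r = phi c p' / phi c d'"
    using poly_at_phi[OF c] by auto
  from e d d' have "p * d' = p' * d" by (simp add: eq_fract)
  then have "phi c p * phi c d' = phi c p' * phi c d" by (metis phi_mult[OF c])
  then show "r = phi c p / phi c d" using r phi_nz[OF c d] phi_nz[OF c d']
    by (simp add: frac_eq_eq)
qed

lemma rf_ord_Fract:
  assumes "p \<noteq> 0" "d \<noteq> 0"
  shows "rf_ord z (Fract p d) = int (order z p) - int (order z d)"
proof -
  have "(\<exists>p' d'. p' \<noteq> 0 \<and> d' \<noteq> 0 \<and> Fract p d = Fract p' d' \<and> k = int (order z p') - int (order z d'))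
     \<longleftrightarrow> k = int (order z p) - int (order z d)" for k
  proof
    assume "\<exists>p' d'. p' \<noteq> 0 \<and> d' \<noteq> 0 \<and> Fract p d = Fract p' d' \<and> k = int (order z p') - int (order z d')"
    then obtain p' d' where h: "p' \<noteq> 0" "d' \<noteq> 0" "Fract p d = Fract p' d'" "k = int (order z p') - int (order z d')"
      by blast
    then have "p * d' = p' * d" using assms by (simp add: eq_fract)
    then have "order z (p * d') = order z (p' * d)" by simp
    then have "order z p + order z d' = order z p' + order z d"
      using assms h by (simp add: order_mult)
    then show "k = int (order z p) - int (order z d)" using h by linarith
  qed (use assms in blast)
  then show ?thesis unfolding rf_ord_def by simp
qed

lemma rf_ord_mult:
  assumes "f \<noteq> 0" "g \<noteq> 0"
  shows "rf_ord z (f * g) = rf_ord z f + rf_ord z g"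
proof -
  obtain p d where f: "f = Fract p d" "d \<noteq> 0" by (cases f)
  obtain p' d' where g: "g = Fract p' d'" "d' \<noteq> 0" by (cases g)
  have "p \<noteq> 0" "p' \<noteq> 0" using f g assms by (auto simp: Fract_0)
  then show ?thesis using f g
    by (simp add: rf_ord_Fract order_mult)
qed

lemma rf_ord_uminus: "rf_ord z (- f) = rf_ord z f"
proof (cases "f = 0")
  case False
  obtain p d where f: "f = Fract p d" "d \<noteq> 0" by (cases f)
  have "p \<noteq> 0" using f False by (auto simp: Fract_0)
  then show ?thesis using f by (simp add: rf_ord_Fract)
qed simp

lemma rf_ord_finite: "f \<noteq> 0 \<Longrightarrow> finite {z. rf_ord z f \<noteq> 0}"
proof -
  assume "f \<noteq> 0"
  obtain p d where f: "f = Fract p d" "d \<noteq> 0" by (cases f)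
  have p: "p \<noteq> 0" using f \<open>f \<noteq> 0\<close> by (auto simp: Fract_0)
  have "{z. rf_ord z f \<noteq> 0} \<subseteq> {z. poly (p * d) z = 0}"
    using f p by (auto simp: rf_ord_Fract order_0I order_gt_0_iff)
  moreover have "finite {z. poly (p * d) z = 0}"
    using p f by (intro poly_roots_finite) simp
  ultimately show ?thesis by (rule finite_subset)
qed

lemma Rc_one: "Rc c 1 = 1"
  by (simp add: Rc_def pcompose_1)

lemma Rc_power: "Rc c (p ^ n) = Rc c p ^ n"
  by (induct n) (simp_all add: Rc_one Rc_mult)

lemma Rc_lin:
  assumes "z \<noteq> 0"
  shows "Rc c [:-(c/z), 1:] = smult (-(c/z)) [:-z, 1:]"
  using assms by (intro poly_eqI) (auto simp: Rc_def pcompose_pCons coeff_reflect_poly coeff_pCons split: nat.splits)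

lemma poly_Rc: "z \<noteq> 0 \<Longrightarrow> poly (Rc c u) z = z ^ degree (pcompose u [:0,c:]) * poly u (c / z)"
  by (simp add: Rc_def poly_reflect_poly_nz poly_pcompose field_simps)

lemma order_Rc:
  assumes c: "c \<noteq> 0" and z: "z \<noteq> 0" and p: "p \<noteq> 0"
  shows "order z (Rc c p) = order (c/z) p"
proof -
  define w where "w = c / z"
  have w: "w \<noteq> 0" using c z by (simp add: w_def)
  obtain u where u: "p = [:-w,1:] ^ order w p * u" "\<not> [:-w,1:] dvd u"
    using order_decomp[OF p] by blast
  have u0: "u \<noteq> 0" using u p by auto
  have pu: "poly u w \<noteq> 0" using u(2) by (simp add: poly_eq_0_iff_dvd)
  have l: "Rc c [:-w,1:] = smult (-w) [:-z,1:]" using Rc_lin[OF z] by (simp add: w_def)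
  have "Rc c p = Rc c [:-w,1:] ^ order w p * Rc c u"
    by (subst u(1)) (simp only: Rc_mult Rc_power)
  also have "\<dots> = smult ((-w) ^ order w p) ([:-z,1:] ^ order w p * Rc c u)"
    by (simp only: l smult_power mult_smult_left)
  finally have eq: "Rc c p = smult ((-w) ^ order w p) ([:-z,1:] ^ order w p * Rc c u)" .
  moreover have "order z (Rc c u) = 0"
    using pu z by (intro order_0I) (simp add: poly_Rc w_def)
  moreover have "Rc c u \<noteq> 0" using u0 c by (simp add: Rc_eq_0)
  ultimately show ?thesis using w
    by (simp add: eq order_mult order_smult order_power_n_n flip: w_def)
qed

lemma order_X_power: "z \<noteq> 0 \<Longrightarrow> order z ([:0,1:] ^ n :: complex poly) = 0"
  by (intro order_0I) simp

lemma rf_ord_comp: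
  assumes c: "c \<noteq> 0" and z: "z \<noteq> 0" and h: "h \<noteq> 0"
  shows "rf_ord z (rf_comp h (const_rf c / var_s)) = rf_ord (c / z) h"
proof -
  obtain p d where f: "h = Fract p d" "d \<noteq> 0" by (cases h)
  have p: "p \<noteq> 0" using f h by (auto simp: Fract_0)
  have "rf_comp h (const_rf c / var_s) = phi c p / phi c d"
    using f c by (simp add: rf_comp_Fract)
  also have "\<dots> = Fract (Rc c p * [:0,1:] ^ degree d) (Rc c d * [:0,1:] ^ degree p)"
    using var_s_nz Rc_eq_0[OF c, of d] f(2)
    by (simp add: phi_def Fract_conv_to_fract to_fract_power var_s_def field_simps)
  finally show ?thesis
    using f p c z Rc_eq_0[OF c]
    by (simp add: rf_ord_Fract order_mult order_X_power order_Rc)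
qed

lemma powi_inj:
  fixes q :: real
  assumes q: "q \<noteq> 0" and nr: "\<forall>n::nat. n > 0 \<longrightarrow> q ^ n \<noteq> 1"
    and e: "q powi m = q powi m'"
  shows "m = m'"
proof (rule ccontr)
  assume ne: "m \<noteq> m'"
  have gen: "q powi a = q powi b \<Longrightarrow> a < b \<Longrightarrow> False" for a b
  proof -
    assume ab: "q powi a = q powi b" "a < b"
    have "q powi (b - a) = 1" using ab q by (simp add: power_int_diff)
    moreover have "q powi (b - a) = q ^ nat (b - a)" using ab by (simp add: power_int_nonneg_exp)
    ultimately show False using nr ab(2) by (metis zero_less_nat_eq diff_gt_0_iff_gt)
  qed
  show False using ne e gen[of m m'] gen[of m' m] by (cases "m < m'") auto
qed

lemma sigma_some:
  fixes q :: real
  assumes q: "q \<noteq> 0" and nr: "\<forall>n::nat. n > 0 \<longrightarrow> q ^ n \<noteq> 1"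
    and Q: "Q \<noteq> 0" and e: "complex_of_real q powi m * Q = P'"
  shows "sigma_dist (complex_of_real q) Q P' \<noteq> None"
proof -
  have "\<exists>!n::int. complex_of_real q powi n * Q = P'"
  proof (rule ex1I[of _ m])
    fix n assume "complex_of_real q powi n * Q = P'"
    then have "complex_of_real q powi n * Q = complex_of_real q powi m * Q" using e by simp
    then have "complex_of_real (q powi n) = complex_of_real (q powi m)" using Q by simp
    then have "q powi n = q powi m" by (simp only: of_real_eq_iff)
    then show "n = m" using powi_inj[OF q nr] by blast
  qed (rule e)
  then show ?thesis unfolding sigma_dist_def by simp
qed

lemma orbit_contra:
  fixes F :: "int \<Rightarrow> int"
  assumes mono: "\<And>n. F (n + 1) \<le> F n" and strict: "F (n0 + 1) < F n0"
    and fin: "finite {n. F n \<noteq> 0}"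
  shows False
proof -
  have anti: "F (m + int k) \<le> F m" for m k
  proof (induct k)
    case (Suc k)
    have "F (m + int (Suc k)) = F ((m + int k) + 1)" by (simp add: ac_simps)
    also have "\<dots> \<le> F (m + int k)" by (rule mono)
    finally show ?case using Suc by simp
  qed simp
  have "\<not> {n0+1..} \<subseteq> {n. F n \<noteq> 0}"
    using fin infinite_Ici[of "n0+1"] finite_subset by blast
  then obtain N2 where N2: "N2 \<ge> n0 + 1" "F N2 = 0" by auto
  have "\<not> {..n0} \<subseteq> {n. F n \<noteq> 0}"
    using fin infinite_Iic[of "n0"] finite_subset by blast
  then obtain N1 where N1: "N1 \<le> n0" "F N1 = 0" by auto
  have "F N2 \<le> F (n0 + 1)" using anti[of "n0+1" "nat (N2 - (n0+1))"] N2 by simp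
  moreover have "F n0 \<le> F N1" using anti[of N1 "nat (n0 - N1)"] N1 by simp
  ultimately show False using N1 N2 strict by simp
qed

lemma powi_c_inj:
  fixes q :: real
  assumes q: "q \<noteq> 0" and nr: "\<forall>n::nat. n > 0 \<longrightarrow> q ^ n \<noteq> 1"
    and Q: "Q \<noteq> 0" and e: "complex_of_real q powi n * Q = complex_of_real q powi m * Q"
  shows "n = m"
proof -
  have "complex_of_real (q powi n) = complex_of_real (q powi m)" using e Q by simp
  then have "q powi n = q powi m" by (simp only: of_real_eq_iff)
  then show "n = m" using powi_inj[OF q nr] by blast
qed

theorem lemma3p12:
  fixes S :: "(int \<times> int) set" and d :: "int \<Rightarrow> int \<Rightarrow> real"
    and a b t q :: real and x y h1 h2 :: ratfun and P1 P2 P3 P4 :: complex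
  assumes steps: "S \<in> genus_zero_step_sets"
    and weights_pos: "\<forall>i j. (i, j) \<in> S \<longrightarrow> d i j > 0"
    and weights_zero: "\<forall>i j. (i, j) \<notin> S \<longrightarrow> d i j = 0"
    and ab: "a > 0" "b > 0"
    and t_transc: "transcendental_over (gen_subfield ({a, b} \<union> {d i j | i j. (i, j) \<in> S})) t"
    and q_nz: "q \<noteq> 0" and q_not_root: "\<forall>n::nat. n > 0 \<longrightarrow> q ^ n \<noteq> 1"
    and param: "kernel_rf d t x y = 0" "generically_injective x y"
    and x_inv: "iota1_rf x = x"
    and y_inv: "iota2_rf (complex_of_real q) y = y"
    and div1: "divisor_is_PP'_0_inf
                 (const_rf (complex_of_real (1 - 1 / a)) / x - const_rf (complex_of_real (t * d 1 (-1))) / y)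
                 P1 P2"
    and div2: "divisor_is_PP'_0_inf
                 (const_rf (complex_of_real (1 - 1 / b)) / y - const_rf (complex_of_real (t * d (-1) 1)) / x)
                 P3 P4"
    and P_nz: "P1 \<noteq> 0" "P2 \<noteq> 0" "P3 \<noteq> 0" "P4 \<noteq> 0"
    and no_match: "\<exists>Qm \<in> {P1, P2, complex_of_real q / P3, complex_of_real q / P4}.
                     \<forall>Qp \<in> {1 / P1, 1 / P2, P3 / complex_of_real q, P4 / complex_of_real q}.
                       sigma_dist (complex_of_real q) Qm Qp = None"
    and eq: "(const_rf (complex_of_real (1 - 1 / a)) / x - const_rf (complex_of_real (t * d 1 (-1))) / y) * h1
           + (const_rf (complex_of_real (1 - 1 / b)) / y - const_rf (complex_of_real (t * d (-1) 1)) / x) * h2 = 0"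
    and h1_anti: "iota1_rf h1 = - h1"
    and h2_anti: "iota2_rf (complex_of_real q) h2 = - h2"
  shows "h1 = 0 \<and> h2 = 0"
proof (rule ccontr)
  assume nz: "\<not> (h1 = 0 \<and> h2 = 0)"
  define G1 where "G1 = const_rf (complex_of_real (1 - 1 / a)) / x - const_rf (complex_of_real (t * d 1 (-1))) / y"
  define G2 where "G2 = const_rf (complex_of_real (1 - 1 / b)) / y - const_rf (complex_of_real (t * d (-1) 1)) / x"
  define qc where "qc = complex_of_real q"
  have qc0: "qc \<noteq> 0" using q_nz by (simp add: qc_def)
  have G1: "G1 \<noteq> 0" "\<And>z. rf_ord z G1 = int (count {#P1, P2#} z) - (if z = 0 then 1 else 0)"
    using div1 unfolding divisor_is_PP'_0_inf_def G1_def by blast+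
  have G2: "G2 \<noteq> 0" "\<And>z. rf_ord z G2 = int (count {#P3, P4#} z) - (if z = 0 then 1 else 0)"
    using div2 unfolding divisor_is_PP'_0_inf_def G2_def by blast+
  have eq': "G1 * h1 = - (G2 * h2)" using eq unfolding G1_def G2_def by (simp add: eq_neg_iff_add_eq_0)
  have h1nz: "h1 \<noteq> 0"
  proof
    assume "h1 = 0"
    then have "G2 * h2 = 0" using eq' by simp
    then show False using G2(1) nz \<open>h1 = 0\<close> by simp
  qed
  have h2nz: "h2 \<noteq> 0"
  proof
    assume "h2 = 0"
    then have "G1 * h1 = 0" using eq' by simp
    then show False using G1(1) h1nz by simp
  qed
  define c1 where "c1 z = int (count {#P1, P2#} z)" for z
  define c2 where "c2 z = int (count {#P3, P4#} z)" for z
  define e where "e z = rf_ord z h2" for z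
  have key: "c1 z + rf_ord z h1 = c2 z + e z" if z: "z \<noteq> 0" for z
  proof -
    have "rf_ord z (G1 * h1) = rf_ord z (G2 * h2)" using eq' by (simp add: rf_ord_uminus)
    then show ?thesis using G1 G2 h1nz h2nz z by (simp add: rf_ord_mult c1_def c2_def e_def)
  qed
  have s1: "rf_ord z h1 = rf_ord (1 / z) h1" if z: "z \<noteq> 0" for z
  proof -
    have "rf_ord z h1 = rf_ord z (iota1_rf h1)" using h1_anti by (simp add: rf_ord_uminus)
    also have "\<dots> = rf_ord z (rf_comp h1 (const_rf 1 / var_s))" by (simp add: iota1_rf_def const_rf_1)
    also have "\<dots> = rf_ord (1 / z) h1" using z h1nz by (simp add: rf_ord_comp)
    finally show ?thesis .
  qed
  have s2: "e z = e (qc / z)" if z: "z \<noteq> 0" for z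
  proof -
    have "e z = rf_ord z (iota2_rf qc h2)" using h2_anti by (simp add: rf_ord_uminus e_def qc_def)
    also have "\<dots> = rf_ord z (rf_comp h2 (const_rf qc / var_s))" by (simp add: iota2_rf_def)
    also have "\<dots> = e (qc / z)" using z h2nz qc0 by (simp add: rf_ord_comp e_def)
    finally show ?thesis .
  qed
  have step: "e (qc * z) - e z = c2 z - c1 z - c2 (1 / z) + c1 (1 / z)" if z: "z \<noteq> 0" for z
  proof -
    have "e (1 / z) = e (qc * z)" using s2[of "1 / z"] z by simp
    then show ?thesis using key[OF z] key[of "1 / z"] s1[OF z] z by simp
  qed
  obtain Qm where Qm: "Qm \<in> {P1, P2, qc / P3, qc / P4}"
    and nm: "\<forall>Qp \<in> {1 / P1, 1 / P2, P3 / qc, P4 / qc}. sigma_dist qc Qm Qp = None"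
    using no_match unfolding qc_def by blast
  have Qm0: "Qm \<noteq> 0" using Qm P_nz qc0 by auto
  have nm': "qc powi m * Qm \<noteq> Qp" if "Qp \<in> {1 / P1, 1 / P2, P3 / qc, P4 / qc}" for m Qp
  proof
    assume "qc powi m * Qm = Qp"
    then have "sigma_dist qc Qm Qp \<noteq> None"
      using sigma_some[OF q_nz q_not_root Qm0, of m Qp] unfolding qc_def by blast
    moreover have "sigma_dist qc Qm Qp = None" by (rule bspec[OF nm that])
    ultimately show False by simp
  qed
  define F where "F n = e (qc powi n * Qm)" for n
  have z0: "qc powi n * Qm \<noteq> 0" for n using qc0 Qm0 by simp
  have Fstep: "F (n + 1) - F n = - c1 (qc powi n * Qm) - c2 (1 / (qc powi n * Qm))" for n
  proof -
    define z where "z = qc powi n * Qm"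
    have qz: "qc * z = qc powi (n + 1) * Qm" using qc0 by (simp add: z_def power_int_add_1')
    have pm: "qc powi (n - 1) * Qm = z / qc" using qc0 by (simp add: z_def power_int_diff)
    have "z \<noteq> P3" "z \<noteq> P4" using nm'[of "P3 / qc" "n - 1"] nm'[of "P4 / qc" "n - 1"] pm qc0 by auto
    then have "c2 z = 0" by (simp add: c2_def)
    moreover have "1 / z \<noteq> P1" "1 / z \<noteq> P2" using nm'[of "1 / P1" n] nm'[of "1 / P2" n] z0[of n] P_nz
      by (auto simp: z_def field_simps)
    then have "c1 (1 / z) = 0" by (simp add: c1_def)
    moreover have "F (n + 1) = e (qc * z)" by (simp only: F_def qz)
    moreover have "F n = e z" by (simp add: F_def z_def)
    ultimately show ?thesis using step[of z] z0[of n] unfolding z_def[symmetric] by simp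
  qed
  have mono: "F (n + 1) \<le> F n" for n
    using Fstep[of n] by (simp add: c1_def c2_def)
  have strict: "\<exists>n0. F (n0 + 1) < F n0"
  proof -
    have "Qm \<in> {P1, P2} \<or> Qm \<in> {qc / P3, qc / P4}" using Qm by auto
    then show ?thesis
    proof
      assume "Qm \<in> {P1, P2}"
      then have "c1 Qm > 0" by (auto simp: c1_def)
      then have "F (0 + 1) < F 0" using Fstep[of 0] by (simp add: c2_def)
      then show ?thesis by blast
    next
      assume "Qm \<in> {qc / P3, qc / P4}"
      then have "1 / (qc powi (-1) * Qm) \<in> {P3, P4}" using qc0 P_nz by (auto simp: power_int_minus)
      then have "c2 (1 / (qc powi (-1) * Qm)) > 0" by (auto simp: c2_def)
      then have "F (-1 + 1) < F (-1)" using Fstep[of "-1"] by (simp add: c1_def)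
      then show ?thesis by blast
    qed
  qed
  then obtain n0 where n0: "F (n0 + 1) < F n0" by blast
  have "finite ((\<lambda>n. qc powi n * Qm) -` {z. rf_ord z h2 \<noteq> 0})"
  proof (rule finite_vimageI)
    show "finite {z. rf_ord z h2 \<noteq> 0}" using rf_ord_finite[OF h2nz] .
    show "inj (\<lambda>n. qc powi n * Qm)"
      using powi_c_inj[OF q_nz q_not_root Qm0] unfolding qc_def by (auto intro: injI)
  qed
  then have fin: "finite {n. F n \<noteq> 0}" by (simp add: F_def e_def vimage_def)
  show False using orbit_contra[OF mono n0 fin] .
qed

end
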